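(* Let $R$ be a commutative ring with nonzero identity, $\delta$ an expansion of ideals of $R$, and $I$ a proper ideal of $R$ with $\delta(\delta(I))=\delta(I)$ (for instance $\delta=\delta_1$, $\delta_1(J)=\sqrt{J}$). Then: (1) If $I$ is a $\delta$-$n$-ideal and $a\notin\sqrt{0}$, then $\delta((I:a))=\delta(I)$. (2) $\delta(I)$ is an $n$-ideal if and only if $\delta(I)$ is a $\delta$-$n$-ideal. (3) If $J$ is an ideal of $R$ and $K$ an ideal of $R$ with $IK=JK$, where $I,J$ are $\delta$-$n$-ideals of $R$, $\delta(\delta(J))=\delta(J)$ and $K\cap(R\setminus\sqrt{0})\neq\emptyset$, then $\delta(I)=\delta(J)$. (4) If $K$ is an ideal of $R$ such that $IK$ and $I$ are $\delta$-$n$-ideals of $R$, $\delta(\delta(IK))=\delta(IK)$ and $K\cap(R\setminus\sqrt{0})\neq\emptyset$, then $\delta(IK)=\delta(I)$.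
   Context: An expansion of ideals of a ring $R$ is a map $\delta$ from the set of ideals of $R$ to itself such that $I\subseteq\delta(I)$ for every ideal $I$, and $\delta(I)\subseteq\delta(J)$ whenever $I\subseteq J$. $\sqrt{0}$ denotes the nilradical of $R$ and $(I:a)=\{r\in R: ra\in I\}$. Given an expansion $\delta$, a proper ideal $I$ of $R$ is a $\delta$-$n$-ideal if whenever $a,b\in R$ with $ab\in I$ and $a\notin\sqrt{0}$, then $b\in\delta(I)$. An $n$-ideal is a proper ideal $I$ such that $ab\in I$ and $a\notin\sqrt{0}$ imply $b\in I$. *)

theory Defs
  imports "HOL-Algebra.Ideal_Product"
begin

definition nilrad :: "('a, 'b) ring_scheme \<Rightarrow> 'a set" where
  "nilrad R = {a \<in> carrier R. \<exists>n::nat. a [^]\<^bsub>R\<^esub> n = \<zero>\<^bsub>R\<^esub>}"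

definition colon :: "('a, 'b) ring_scheme \<Rightarrow> 'a set \<Rightarrow> 'a \<Rightarrow> 'a set" where
  "colon R I a = {r \<in> carrier R. r \<otimes>\<^bsub>R\<^esub> a \<in> I}"

definition expansion :: "('a, 'b) ring_scheme \<Rightarrow> ('a set \<Rightarrow> 'a set) \<Rightarrow> bool" where
  "expansion R \<delta> \<longleftrightarrow>
     (\<forall>I. ideal I R \<longrightarrow> ideal (\<delta> I) R \<and> I \<subseteq> \<delta> I) \<and>
     (\<forall>I J. ideal I R \<longrightarrow> ideal J R \<longrightarrow> I \<subseteq> J \<longrightarrow> \<delta> I \<subseteq> \<delta> J)"

definition delta_n_ideal :: "('a, 'b) ring_scheme \<Rightarrow> ('a set \<Rightarrow> 'a set) \<Rightarrow> 'a set \<Rightarrow> bool" where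
  "delta_n_ideal R \<delta> I \<longleftrightarrow> ideal I R \<and> I \<noteq> carrier R \<and>
     (\<forall>a \<in> carrier R. \<forall>b \<in> carrier R.
        a \<otimes>\<^bsub>R\<^esub> b \<in> I \<longrightarrow> a \<notin> nilrad R \<longrightarrow> b \<in> \<delta> I)"

definition n_ideal :: "('a, 'b) ring_scheme \<Rightarrow> 'a set \<Rightarrow> bool" where
  "n_ideal R I \<longleftrightarrow> ideal I R \<and> I \<noteq> carrier R \<and>
     (\<forall>a \<in> carrier R. \<forall>b \<in> carrier R.
        a \<otimes>\<^bsub>R\<^esub> b \<in> I \<longrightarrow> a \<notin> nilrad R \<longrightarrow> b \<in> I)"

end

theory Submission
  imports Defs
begin

lemma colon_ideal:
  fixes R (structure)
  assumes cr: "cring R" and I: "ideal I R" and a: "a \<in> carrier R"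
  shows "ideal (colon R I a) R"
proof -
  interpret cring R by (rule cr)
  interpret ideal I R by (rule I)
  show ?thesis
  proof (rule idealI)
    show "ring R" by (rule ring_axioms)
    show "subgroup (colon R I a) (add_monoid R)"
    proof (rule group.subgroupI[OF a_group])
      show "colon R I a \<subseteq> carrier (add_monoid R)" by (auto simp: colon_def)
      show "colon R I a \<noteq> {}" using a by (auto simp: colon_def intro!: exI[of _ \<zero>])
      fix g h assume g: "g \<in> colon R I a" and h: "h \<in> colon R I a"
      then have gc: "g \<in> carrier R" "g \<otimes> a \<in> I" and hc: "h \<in> carrier R" "h \<otimes> a \<in> I"
        by (auto simp: colon_def)
      have "(\<ominus> g) \<otimes> a = \<ominus> (g \<otimes> a)" using gc a by (simp add: l_minus)
      moreover have "inv\<^bsub>add_monoid R\<^esub> g = \<ominus> g" by (simp add: a_inv_def)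
      ultimately show "inv\<^bsub>add_monoid R\<^esub> g \<in> colon R I a"
        using gc a a_inv_closed by (auto simp: colon_def)
      have "(g \<oplus> h) \<otimes> a = g \<otimes> a \<oplus> h \<otimes> a" using gc hc a by (simp add: l_distr)
      then show "g \<otimes>\<^bsub>add_monoid R\<^esub> h \<in> colon R I a"
        using gc hc a a_closed by (auto simp: colon_def)
    qed
    fix r x assume r: "r \<in> colon R I a" and x: "x \<in> carrier R"
    then have rc: "r \<in> carrier R" "r \<otimes> a \<in> I" by (auto simp: colon_def)
    have "x \<otimes> r \<otimes> a = x \<otimes> (r \<otimes> a)" using rc x a by (simp add: m_assoc)
    then show "x \<otimes> r \<in> colon R I a" using rc x I_l_closed by (auto simp: colon_def)
    have "r \<otimes> x \<otimes> a = x \<otimes> (r \<otimes> a)" using rc x a by (metis m_assoc m_comm)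
    then show "r \<otimes> x \<in> colon R I a" using rc x I_l_closed by (auto simp: colon_def)
  qed
qed

theorem proposition2p14:
  fixes R (structure) and \<delta> :: "'a set \<Rightarrow> 'a set" and I :: "'a set"
  assumes "cring R" and "\<one>\<^bsub>R\<^esub> \<noteq> \<zero>\<^bsub>R\<^esub>"
    and "expansion R \<delta>"
    and "ideal I R" and "I \<noteq> carrier R"
    and "\<delta> (\<delta> I) = \<delta> I"
  shows
    "(\<forall>a \<in> carrier R. delta_n_ideal R \<delta> I \<longrightarrow> a \<notin> nilrad R \<longrightarrow>
        \<delta> (colon R I a) = \<delta> I)
   \<and> (n_ideal R (\<delta> I) \<longleftrightarrow> delta_n_ideal R \<delta> (\<delta> I))
   \<and> (\<forall>J K. ideal J R \<longrightarrow> ideal K R \<longrightarrow> I \<cdot> K = J \<cdot> K \<longrightarrow>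
        delta_n_ideal R \<delta> I \<longrightarrow> delta_n_ideal R \<delta> J \<longrightarrow> \<delta> (\<delta> J) = \<delta> J \<longrightarrow>
        K \<inter> (carrier R - nilrad R) \<noteq> {} \<longrightarrow> \<delta> I = \<delta> J)
   \<and> (\<forall>K. ideal K R \<longrightarrow> delta_n_ideal R \<delta> (I \<cdot> K) \<longrightarrow> delta_n_ideal R \<delta> I \<longrightarrow>
        \<delta> (\<delta> (I \<cdot> K)) = \<delta> (I \<cdot> K) \<longrightarrow>
        K \<inter> (carrier R - nilrad R) \<noteq> {} \<longrightarrow> \<delta> (I \<cdot> K) = \<delta> I)"
proof -
  interpret cring R by (rule assms(1))
  have ex1: "\<And>J. ideal J R \<Longrightarrow> ideal (\<delta> J) R \<and> J \<subseteq> \<delta> J"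
    using assms(3) unfolding expansion_def by blast
  have ex2: "\<And>J L. ideal J R \<Longrightarrow> ideal L R \<Longrightarrow> J \<subseteq> L \<Longrightarrow> \<delta> J \<subseteq> \<delta> L"
    using assms(3) unfolding expansion_def by blast
  have dI: "ideal (\<delta> I) R" using ex1 assms(4) by blast
  have P1: "\<delta> (colon R I a) = \<delta> I"
    if a: "a \<in> carrier R" and dn: "delta_n_ideal R \<delta> I" and na: "a \<notin> nilrad R" for a
  proof
    have ci: "ideal (colon R I a) R" by (rule colon_ideal[OF assms(1) assms(4) a])
    have "colon R I a \<subseteq> \<delta> I"
    proof
      fix r assume "r \<in> colon R I a"
      then have r: "r \<in> carrier R" "r \<otimes> a \<in> I" by (auto simp: colon_def)
      then have "a \<otimes> r \<in> I" using a by (simp add: m_comm)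
      then show "r \<in> \<delta> I" using dn na a r unfolding delta_n_ideal_def by blast
    qed
    then have "\<delta> (colon R I a) \<subseteq> \<delta> (\<delta> I)" using ex2 ci dI by blast
    then show "\<delta> (colon R I a) \<subseteq> \<delta> I" using assms(6) by simp
    have "I \<subseteq> colon R I a"
      using a assms(4) ideal.I_r_closed ideal.Icarr by (fastforce simp: colon_def)
    then show "\<delta> I \<subseteq> \<delta> (colon R I a)" using ex2 ci assms(4) by blast
  qed
  have P2: "n_ideal R (\<delta> I) \<longleftrightarrow> delta_n_ideal R \<delta> (\<delta> I)"
    unfolding n_ideal_def delta_n_ideal_def using assms(6) by simp
  have key: "X \<subseteq> \<delta> Y"
    if X: "ideal X R" and Y: "ideal Y R" and K: "ideal K R" and sub: "X \<cdot> K \<subseteq> Y"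
      and dn: "delta_n_ideal R \<delta> Y" and k: "k \<in> K" "k \<notin> nilrad R" for X Y K k
  proof
    fix x assume x: "x \<in> X"
    have kc: "k \<in> carrier R" by (rule ideal.Icarr[OF K k(1)])
    have xc: "x \<in> carrier R" by (rule ideal.Icarr[OF X x])
    have "x \<otimes> k \<in> X \<cdot> K" by (rule ideal_prod.prod[OF x k(1)])
    moreover have "x \<otimes> k = k \<otimes> x" by (rule m_comm[OF xc kc])
    ultimately have "k \<otimes> x \<in> Y" using sub by auto
    then show "x \<in> \<delta> Y" using dn k(2) kc xc unfolding delta_n_ideal_def by blast
  qed
  have P3: "\<delta> I = \<delta> J"
    if J: "ideal J R" and K: "ideal K R" and eq: "I \<cdot> K = J \<cdot> K"
      and dI': "delta_n_ideal R \<delta> I" and dJ': "delta_n_ideal R \<delta> J" and JJ: "\<delta> (\<delta> J) = \<delta> J"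
      and ne: "K \<inter> (carrier R - nilrad R) \<noteq> {}" for J K
  proof -
    obtain k where k: "k \<in> K" "k \<notin> nilrad R" using ne by blast
    have dJ: "ideal (\<delta> J) R" using ex1 J by blast
    have "I \<cdot> K \<subseteq> I" using ideal_prod_inter[OF assms(4) K] by blast
    then have "J \<subseteq> \<delta> I" using key[OF J assms(4) K _ dI' k] eq by simp
    then have a1: "\<delta> J \<subseteq> \<delta> I" using ex2[OF J dI] assms(6) by simp
    have "J \<cdot> K \<subseteq> J" using ideal_prod_inter[OF J K] by blast
    then have "I \<subseteq> \<delta> J" using key[OF assms(4) J K _ dJ' k] eq by simp
    then have "\<delta> I \<subseteq> \<delta> J" using ex2[OF assms(4) dJ] JJ by simp
    with a1 show ?thesis by blast
  qed
  have P4: "\<delta> (I \<cdot> K) = \<delta> I"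
    if K: "ideal K R" and dIK: "delta_n_ideal R \<delta> (I \<cdot> K)" and dI': "delta_n_ideal R \<delta> I"
      and IKK: "\<delta> (\<delta> (I \<cdot> K)) = \<delta> (I \<cdot> K)"
      and ne: "K \<inter> (carrier R - nilrad R) \<noteq> {}" for K
  proof
    obtain k where k: "k \<in> K" "k \<notin> nilrad R" using ne by blast
    have IK: "ideal (I \<cdot> K) R" by (rule ideal_prod_is_ideal[OF assms(4) K])
    have dIK': "ideal (\<delta> (I \<cdot> K)) R" using ex1 IK by blast
    have "I \<cdot> K \<subseteq> I" using ideal_prod_inter[OF assms(4) K] by blast
    then show "\<delta> (I \<cdot> K) \<subseteq> \<delta> I" using ex2[OF IK assms(4)] by blast
    have "I \<subseteq> \<delta> (I \<cdot> K)" using key[OF assms(4) IK K _ dIK k] by simp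
    then show "\<delta> I \<subseteq> \<delta> (I \<cdot> K)" using ex2[OF assms(4) dIK'] IKK by simp
  qed
  show ?thesis using P1 P2 P3 P4 by blast
qed

end
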